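(* Let $\mathcal{X}=\prod_{i=1}^{p}\mathcal{X}_i$, where each $\mathcal{X}_i\subseteq\mathbb{R}^{n_i}$ is closed and convex, and write $\mathbf{x}=(\mathbf{x}(1),\dots,\mathbf{x}(p))$ with $\mathbf{x}(i)=\mathbf{U}_i^{\mathrm T}\mathbf{x}\in\mathbb{R}^{n_i}$ the $i$-th block. Let $f\in C^1(\mathcal{X},\mathbb{R})$ have block-coordinate Lipschitz gradient with block smoothness constants $(L_i)_{i=1}^p$, i.e. $\|\nabla_i f(\mathbf{x}+\mathbf{U}_i\mathbf{h}_i)-\nabla_i f(\mathbf{x})\|\le L_i\|\mathbf{h}_i\|$ for all $\mathbf{x}$ and $\mathbf{h}_i\in\mathbb{R}^{n_i}$, where $\nabla_i f:=\mathbf{U}_i^{\mathrm T}\nabla f$, and set $L:=\max_i L_i$. Let $h\in C(\mathcal{X},\mathbb{R})$ be $\alpha$-strongly convex with block-separable form $h(\mathbf{x})=\sum_{i=1}^p h_i(\mathbf{x}(i))$, and put $\Phi=f+h$ and $\Phi^*=\min_{\mathbf{x}\in\mathcal{X}}\Phi(\mathbf{x})$. Let $\omega$ be a distance generating function with modulus $\alpha$ whose prox-function is block separable, $V(\mathbf{x},\mathbf{z})=\sum_{i=1}^pV_i(\mathbf{x}(i),\mathbf{z}(i))$. Run coordinate mirror descent on $\Phi$ over $\mathcal{X}$ from $\mathbf{x}_0\in\mathcal{X}$ for $N$ outer iterations with all step sizes $\gamma_{k,i}:=\alpha/L$: set $\mathbf{x}_0^0=\mathbf{x}_0$; for each outer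 iteration $k$ and $i=1,\dots,p$, $$\mathbf{x}_k^i(i)\in\arg\min_{\mathbf{u}_i\in\mathcal{X}_i}\Big(\langle\nabla_i f(\mathbf{x}_k^{i-1}),\mathbf{u}_i\rangle+\tfrac{1}{\gamma_{k,i}}V_i(\mathbf{u}_i,\mathbf{x}_k^{i-1}(i))+h_i(\mathbf{u}_i)\Big),\qquad \mathbf{x}_k^i(j)=\mathbf{x}_k^{i-1}(j)\ (j\neq i),$$ and $\mathbf{x}_{k+1}^0:=\mathbf{x}_k^p$, $\mathbf{x}_k:=\mathbf{x}_k^0$. Define $\mathbf{g}_{\mathcal{X},k,i}:=\frac{1}{\gamma_{k,i}}\big(\mathbf{x}_k^{i-1}(i)-\mathbf{x}_k^{i}(i)\big)$, $\Delta(\mathbf{x}_k,\mathbf{x}_{k-1}):=\sum_{i=1}^p\|\mathbf{g}_{\mathcal{X},k,i}\|^2$, and $D:=\big((\Phi(\mathbf{x}_0)-\Phi^* )/L\big)^{1/2}$. Then $$\min_k\Delta(\mathbf{x}_k,\mathbf{x}_{k-1})\le\frac{D^2L}{N(\alpha^2/2L)}=\frac{2D^2L^2}{N\alpha^2},$$ the minimum being over the $N$ outer iterations.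
   Context: A distance generating function with modulus $\alpha>0$ (w.r.t. the Euclidean norm) is a continuously differentiable $\omega:\mathcal{X}\to\mathbb{R}$ with $\langle\mathbf{x}-\mathbf{z},\nabla\omega(\mathbf{x})-\nabla\omega(\mathbf{z})\rangle\ge\alpha\|\mathbf{x}-\mathbf{z}\|^2$ for all $\mathbf{x},\mathbf{z}\in\mathcal{X}$; its prox-function (Bregman divergence) is $V(\mathbf{x},\mathbf{z})=\omega(\mathbf{x})-\omega(\mathbf{z})-\langle\nabla\omega(\mathbf{z}),\mathbf{x}-\mathbf{z}\rangle$. The matrices $\mathbf{U}_i\in\mathbb{R}^{n\times n_i}$ ($n=\sum_i n_i$) satisfy $\mathbf{x}(i)=\mathbf{U}_i^{\mathrm T}\mathbf{x}$ and $\mathbf{x}=\sum_i\mathbf{U}_i\mathbf{x}(i)$. The minimum $\Phi^*$ is assumed to exist. *)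

theory Defs
  imports "HOL-Analysis.Analysis"
begin

text \<open>Coordinates of R^n are indexed by the finite type 'n; blk assigns each coordinate
  to its block (blocks numbered 1..p). block_proj blk i x is U_i U_i^T x, i.e. the i-th
  block x(i) embedded back into R^n (zero outside block i).\<close>
definition block_proj :: "('n::finite \<Rightarrow> nat) \<Rightarrow> nat \<Rightarrow> real^'n \<Rightarrow> real^'n" where
  "block_proj blk i x = (\<chi> j. if blk j = i then x $ j else 0)"

definition strongly_convex_on :: "real \<Rightarrow> ('a::real_normed_vector) set \<Rightarrow> ('a \<Rightarrow> real) \<Rightarrow> bool" where
  "strongly_convex_on \<alpha> S g \<longleftrightarrow> convex S \<and>
     (\<forall>x\<in>S. \<forall>y\<in>S. \<forall>t::real. 0 \<le> t \<and> t \<le> 1 \<longrightarrow>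
        g (t *\<^sub>R x + (1 - t) *\<^sub>R y) \<le> t * g x + (1 - t) * g y - \<alpha> / 2 * t * (1 - t) * (norm (x - y))\<^sup>2)"

definition dist_gen_fun :: "real \<Rightarrow> ('a::real_inner) set \<Rightarrow> ('a \<Rightarrow> real) \<Rightarrow> ('a \<Rightarrow> 'a) \<Rightarrow> bool" where
  "dist_gen_fun \<alpha> X w gw \<longleftrightarrow> 0 < \<alpha> \<and>
     (\<forall>x\<in>X. (w has_derivative (\<lambda>v. gw x \<bullet> v)) (at x within X)) \<and> continuous_on X gw \<and>
     (\<forall>x\<in>X. \<forall>z\<in>X. (x - z) \<bullet> (gw x - gw z) \<ge> \<alpha> * (norm (x - z))\<^sup>2)"

definition bregman :: "('a::real_inner \<Rightarrow> real) \<Rightarrow> ('a \<Rightarrow> 'a) \<Rightarrow> 'a \<Rightarrow> 'a \<Rightarrow> real" where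
  "bregman w gw x z = w x - w z - gw z \<bullet> (x - z)"

end

theory Submission
  imports Defs
begin

lemma bp_add: "block_proj b i (x + y) = block_proj b i x + block_proj b i y"
  by (simp add: block_proj_def vec_eq_iff)
lemma bp_diff: "block_proj b i (x - y) = block_proj b i x - block_proj b i y"
  by (simp add: block_proj_def vec_eq_iff)
lemma bp_scale: "block_proj b i (c *\<^sub>R x) = c *\<^sub>R block_proj b i x"
  by (simp add: block_proj_def vec_eq_iff)
lemma bp_idem: "block_proj b i (block_proj b i x) = block_proj b i x"
  by (simp add: block_proj_def vec_eq_iff)
lemma bp_inner: "a \<bullet> block_proj b i c = block_proj b i a \<bullet> c"
  unfolding inner_vec_def block_proj_def by (auto intro!: sum.cong)
lemma bp_sum:
  assumes "\<forall>j. b j \<in> S" "finite S"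
  shows "(\<Sum>i\<in>S. block_proj b i x) = x"
proof -
  have "(\<Sum>i\<in>S. block_proj b i x) $ j = x $ j" for j
    using assms by (simp add: block_proj_def sum.delta')
  then show ?thesis by (simp add: vec_eq_iff)
qed
lemma bp_off:
  assumes "\<forall>j. b j \<in> S" "\<forall>j\<in>S. j \<noteq> i \<longrightarrow> block_proj b j x = block_proj b j y"
  shows "block_proj b i (x - y) = x - y"
proof -
  have "(block_proj b i (x - y)) $ c = (x - y) $ c" for c
  proof (cases "b c = i")
    case False
    then have "block_proj b (b c) x $ c = block_proj b (b c) y $ c" using assms by metis
    then show ?thesis using False by (simp add: block_proj_def)
  qed (simp add: block_proj_def)
  then show ?thesis by (simp add: vec_eq_iff)
qed

lemma sum_split_off:
  assumes "finite S" "i \<in> S" "\<forall>j\<in>S. j \<noteq> i \<longrightarrow> block_proj b j x = block_proj b j y"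
  shows "(\<Sum>j\<in>S. F j (block_proj b j x)) = F i (block_proj b i x) + (\<Sum>j\<in>S-{i}. F j (block_proj b j y))"
  using assms by (simp add: sum.remove)

lemma deriv_nonneg_01:
  fixes \<phi> :: "real \<Rightarrow> real"
  assumes "\<And>t. t \<in> {0..1} \<Longrightarrow> (\<phi> has_real_derivative \<phi>' t) (at t within {0..1})"
    "\<And>t. t \<in> {0<..<1} \<Longrightarrow> \<phi>' t \<ge> 0"
  shows "\<phi> 0 \<le> \<phi> 1"
proof -
  have "\<exists>x\<in>{0<..<1}. \<phi> 1 - \<phi> 0 = (\<lambda>h. \<phi>' x * h) (1 - 0)"
    by (rule mvt_simple) (use assms(1) in \<open>auto simp: has_field_derivative_def\<close>)
  then obtain x where "x\<in>{0<..<1}" "\<phi> 1 - \<phi> 0 = \<phi>' x" by auto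
  then show ?thesis using assms(2)[of x] by auto
qed

lemma seg_deriv:
  fixes F :: "'a::real_inner \<Rightarrow> real"
  assumes "\<forall>x\<in>X. (F has_derivative (\<lambda>v. G x \<bullet> v)) (at x within X)" "convex X" "y\<in>X" "y+d\<in>X"
    "t\<in>{0..1}"
  shows "((\<lambda>t. F (y + t *\<^sub>R d)) has_real_derivative (G (y + t *\<^sub>R d) \<bullet> d)) (at t within {0..1})"
proof -
  have sub: "(\<lambda>t. y + t *\<^sub>R d) ` {0..1} \<subseteq> X"
  proof
    fix z assume "z \<in> (\<lambda>t. y + t *\<^sub>R d) ` {0..1}"
    then obtain s where s: "s\<in>{0..1}" "z = y + s *\<^sub>R d" by auto
    have "(1 - s) *\<^sub>R y + s *\<^sub>R (y + d) \<in> X"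
      using assms(2-4) s(1) by (auto intro: convexD)
    moreover have "(1 - s) *\<^sub>R y + s *\<^sub>R (y + d) = z" using s(2) by (simp add: algebra_simps)
    ultimately show "z \<in> X" by simp
  qed
  have d1: "((\<lambda>t. y + t *\<^sub>R d) has_derivative (\<lambda>s. s *\<^sub>R d)) (at t within {0..1})"
    by (auto intro!: derivative_eq_intros)
  have "((\<lambda>t. F (y + t *\<^sub>R d)) has_derivative (\<lambda>s. G (y + t *\<^sub>R d) \<bullet> (s *\<^sub>R d))) (at t within {0..1})"
    by (rule has_derivative_in_compose2[OF _ sub assms(5) d1]) (use assms(1) in auto)
  then show ?thesis
    by (simp add: has_field_derivative_def mult.commute[of _ "G (y + t *\<^sub>R d) \<bullet> d"])
qed

lemma le_lim01:
  fixes a b c :: real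
  assumes "\<And>t. t \<in> {0<..<1} \<Longrightarrow> a \<le> b - c * (1 - t)"
  shows "a \<le> b - c"
proof (rule ccontr)
  assume na: "\<not> a \<le> b - c"
  have c: "c > 0" using assms[of "1/2"] na by auto
  define e where "e = a - (b - c)"
  have e: "e > 0" using na e_def by auto
  define t where "t = min (1/2) (e / (2*c))"
  have t: "t \<in> {0<..<1}" using e c by (auto simp: t_def)
  have "c * t \<le> e / 2" using c e by (auto simp: t_def min_def field_simps)
  then show False using assms[OF t] e_def e by (simp add: algebra_simps)
qed


lemma breg_lb:
  fixes w :: "'a::real_inner \<Rightarrow> real"
  assumes dg: "dist_gen_fun \<alpha> X w gw" and cX: "convex X" and x: "x\<in>X" and z: "z\<in>X"
  shows "bregman w gw x z \<ge> \<alpha>/2 * (norm (x - z))\<^sup>2"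
proof -
  define v where "v = x - z"
  have zv: "z + v \<in> X" using x by (simp add: v_def)
  have wd: "\<forall>x\<in>X. (w has_derivative (\<lambda>v. gw x \<bullet> v)) (at x within X)"
    and mono: "\<forall>x\<in>X. \<forall>z\<in>X. (x - z) \<bullet> (gw x - gw z) \<ge> \<alpha> * (norm (x - z))\<^sup>2"
    using dg by (auto simp: dist_gen_fun_def)
  define \<phi> where "\<phi> = (\<lambda>t. w (z + t *\<^sub>R v) - t * (gw z \<bullet> v) - \<alpha>/2 * t\<^sup>2 * (norm v)\<^sup>2)"
  define \<phi>' where "\<phi>' = (\<lambda>t. gw (z + t *\<^sub>R v) \<bullet> v - gw z \<bullet> v - \<alpha> * t * (norm v)\<^sup>2)"
  have "\<phi> 0 \<le> \<phi> 1"
  proof (rule deriv_nonneg_01)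
    fix t :: real assume t: "t \<in> {0..1}"
    have h1: "((\<lambda>t. w (z + t *\<^sub>R v)) has_real_derivative (gw (z + t *\<^sub>R v) \<bullet> v)) (at t within {0..1})"
      by (rule seg_deriv[OF wd cX z zv t])
    show "(\<phi> has_real_derivative \<phi>' t) (at t within {0..1})"
      unfolding \<phi>_def \<phi>'_def
      by (rule derivative_eq_intros h1 | simp)+
  next
    fix t :: real assume t: "t \<in> {0<..<1}"
    have zt: "z + t *\<^sub>R v \<in> X"
    proof -
      have "(1 - t) *\<^sub>R z + t *\<^sub>R x \<in> X" using cX x z t by (auto intro: convexD)
      moreover have "(1 - t) *\<^sub>R z + t *\<^sub>R x = z + t *\<^sub>R v" by (simp add: v_def algebra_simps)
      ultimately show ?thesis by simp
    qed
    have "(t *\<^sub>R v) \<bullet> (gw (z + t *\<^sub>R v) - gw z) \<ge> \<alpha> * (norm (t *\<^sub>R v))\<^sup>2"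
      using mono zt z by (metis add_diff_cancel_left')
    then have "t * (v \<bullet> (gw (z + t *\<^sub>R v) - gw z)) \<ge> t * (\<alpha> * t * (norm v)\<^sup>2)"
      using t by (simp add: power2_eq_square algebra_simps)
    then have "v \<bullet> (gw (z + t *\<^sub>R v) - gw z) \<ge> \<alpha> * t * (norm v)\<^sup>2"
      using t by simp
    then show "\<phi>' t \<ge> 0" unfolding \<phi>'_def by (simp add: inner_diff_right inner_commute)
  qed
  then show ?thesis
    unfolding \<phi>_def bregman_def v_def by simp
qed

lemma breg_sc:
  fixes w :: "'a::real_inner \<Rightarrow> real"
  assumes dg: "dist_gen_fun \<alpha> X w gw" and cX: "convex X" and a: "a\<in>X" and b: "b\<in>X" and z: "z\<in>X"
    and t: "0 \<le> t" "t \<le> 1"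
  shows "bregman w gw (t *\<^sub>R a + (1 - t) *\<^sub>R b) z \<le> t * bregman w gw a z + (1 - t) * bregman w gw b z
           - \<alpha>/2 * t * (1 - t) * (norm (a - b))\<^sup>2"
proof -
  define m where "m = t *\<^sub>R a + (1 - t) *\<^sub>R b"
  have m: "m \<in> X" using cX a b t by (auto simp: m_def intro: convexD)
  have am: "a - m = (1 - t) *\<^sub>R (a - b)" by (simp add: m_def algebra_simps)
  have bm: "b - m = (- t) *\<^sub>R (a - b)" by (simp add: m_def algebra_simps)
  have A: "bregman w gw a m \<ge> \<alpha>/2 * ((1 - t))\<^sup>2 * (norm (a - b))\<^sup>2"
    using breg_lb[OF dg cX a m] am t by (simp add: power_mult_distrib)
  have B: "bregman w gw b m \<ge> \<alpha>/2 * t\<^sup>2 * (norm (a - b))\<^sup>2"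
    using breg_lb[OF dg cX b m] bm t by (simp add: power_mult_distrib)
  have lin: "t *\<^sub>R (a - m) + (1 - t) *\<^sub>R (b - m) = 0" by (simp add: m_def algebra_simps)
  have "t * bregman w gw a m + (1 - t) * bregman w gw b m = t * w a + (1 - t) * w b - w m
        - gw m \<bullet> (t *\<^sub>R (a - m) + (1 - t) *\<^sub>R (b - m))"
    by (simp add: bregman_def inner_add_right algebra_simps)
  also have "\<dots> = t * w a + (1 - t) * w b - w m" using lin by simp
  finally have E1: "t * bregman w gw a m + (1 - t) * bregman w gw b m = t * w a + (1 - t) * w b - w m" .
  have "t * (\<alpha>/2 * ((1 - t))\<^sup>2 * (norm (a - b))\<^sup>2) + (1 - t) * (\<alpha>/2 * t\<^sup>2 * (norm (a - b))\<^sup>2)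
        \<le> t * bregman w gw a m + (1 - t) * bregman w gw b m"
    using A B t by (intro add_mono mult_left_mono) auto
  moreover have "t * (\<alpha>/2 * ((1 - t))\<^sup>2 * (norm (a - b))\<^sup>2) + (1 - t) * (\<alpha>/2 * t\<^sup>2 * (norm (a - b))\<^sup>2)
        = \<alpha>/2 * t * (1 - t) * (norm (a - b))\<^sup>2" by (simp add: power2_eq_square) algebra
  ultimately have W: "w m \<le> t * w a + (1 - t) * w b - \<alpha>/2 * t * (1 - t) * (norm (a - b))\<^sup>2"
    using E1 by linarith
  have lin2: "m - z = t *\<^sub>R (a - z) + (1 - t) *\<^sub>R (b - z)" by (simp add: m_def algebra_simps)
  have "bregman w gw m z = w m - w z - (t * (gw z \<bullet> (a - z)) + (1 - t) * (gw z \<bullet> (b - z)))"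
    unfolding bregman_def lin2 by (simp add: inner_add_right)
  then show ?thesis using W unfolding m_def[symmetric] bregman_def by (simp add: algebra_simps)
qed

lemma descent:
  fixes f :: "real^'n \<Rightarrow> real"
  assumes fd: "\<forall>x\<in>X. (f has_derivative (\<lambda>v. gf x \<bullet> v)) (at x within X)" and cX: "convex X"
    and y: "y \<in> X" and yd: "y + d \<in> X" and dd: "block_proj b i d = d"
    and lip: "\<forall>x\<in>X. \<forall>hh. x + block_proj b i hh \<in> X \<longrightarrow>
        norm (block_proj b i (gf (x + block_proj b i hh)) - block_proj b i (gf x))
          \<le> Lb * norm (block_proj b i hh)"
  shows "f (y + d) \<le> f y + gf y \<bullet> d + Lb/2 * (norm d)\<^sup>2"
proof -
  define \<phi> where "\<phi> = (\<lambda>t. f y + t * (gf y \<bullet> d) + Lb/2 * t\<^sup>2 * (norm d)\<^sup>2 - f (y + t *\<^sub>R d))"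
  define \<phi>' where "\<phi>' = (\<lambda>t. gf y \<bullet> d + Lb * t * (norm d)\<^sup>2 - gf (y + t *\<^sub>R d) \<bullet> d)"
  have "\<phi> 0 \<le> \<phi> 1"
  proof (rule deriv_nonneg_01)
    fix t :: real assume t: "t \<in> {0..1}"
    have h1: "((\<lambda>t. f (y + t *\<^sub>R d)) has_real_derivative (gf (y + t *\<^sub>R d) \<bullet> d)) (at t within {0..1})"
      by (rule seg_deriv[OF fd cX y yd t])
    show "(\<phi> has_real_derivative \<phi>' t) (at t within {0..1})"
      unfolding \<phi>_def \<phi>'_def
      by (rule derivative_eq_intros h1 | simp)+
  next
    fix t :: real assume t: "t \<in> {0<..<1}"
    have yt: "y + t *\<^sub>R d \<in> X"
    proof -
      have "(1 - t) *\<^sub>R y + t *\<^sub>R (y + d) \<in> X" using cX y yd t by (auto intro: convexD)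
      moreover have "(1 - t) *\<^sub>R y + t *\<^sub>R (y + d) = y + t *\<^sub>R d" by (simp add: algebra_simps)
      ultimately show ?thesis by simp
    qed
    have btd: "block_proj b i (t *\<^sub>R d) = t *\<^sub>R d" using dd by (simp add: bp_scale)
    have L1: "norm (block_proj b i (gf (y + t *\<^sub>R d)) - block_proj b i (gf y)) \<le> Lb * (t * norm d)"
      using lip y yt btd t by (metis abs_of_pos greaterThanLessThan_iff norm_scaleR)
    have "(gf (y + t *\<^sub>R d) - gf y) \<bullet> d = (gf (y + t *\<^sub>R d) - gf y) \<bullet> block_proj b i d"
      using dd by simp
    also have "\<dots> = (block_proj b i (gf (y + t *\<^sub>R d)) - block_proj b i (gf y)) \<bullet> d"
      by (simp add: bp_inner bp_diff)
    also have "\<dots> \<le> norm (block_proj b i (gf (y + t *\<^sub>R d)) - block_proj b i (gf y)) * norm d"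
      by (rule norm_cauchy_schwarz)
    also have "\<dots> \<le> Lb * (t * norm d) * norm d"
      by (rule mult_right_mono[OF L1]) simp
    finally have "(gf (y + t *\<^sub>R d) - gf y) \<bullet> d \<le> Lb * t * (norm d)\<^sup>2"
      by (simp add: power2_eq_square algebra_simps)
    then show "\<phi>' t \<ge> 0" unfolding \<phi>'_def by (simp add: inner_diff_left)
  qed
  then show ?thesis unfolding \<phi>_def by simp
qed


lemma aux_ring: "(g::real) * (A - a/2 * t * (1 - t) * n) = g * A - (g * a)/2 * t * (1 - t) * n"
  by (simp add: algebra_simps)

lemma aux_comb:
  fixes P1 a a' Bu g B' hu hy hy' t L n \<alpha> :: real
  assumes "P1 = t*a + (1-t)*a'" "Bu \<le> g*((1-t)*B') - L/2*t*(1-t)*n" "hu \<le> t*hy + (1-t)*hy' - \<alpha>/2*t*(1-t)*n"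
  shows "P1 + Bu + hu \<le> t*(a + g*0 + hy) + (1-t)*(a' + g*B' + hy') - (\<alpha>+L)/2*t*(1-t)*n"
proof -
  have "t*(a + g*0 + hy) + (1-t)*(a' + g*B' + hy') - (\<alpha>+L)/2*t*(1-t)*n
     = (t*a + (1-t)*a') + (g*((1-t)*B') - L/2*t*(1-t)*n) + (t*hy + (1-t)*hy' - \<alpha>/2*t*(1-t)*n)"
    by (simp add: algebra_simps add_divide_distrib)
  then show ?thesis using assms by linarith
qed

theorem proposition1:
  fixes blk :: "'n::finite \<Rightarrow> nat" and p :: nat
    and Xb :: "nat \<Rightarrow> (real^'n) set" and X :: "(real^'n) set"
    and f :: "real^'n \<Rightarrow> real" and gf :: "real^'n \<Rightarrow> real^'n"
    and Lb :: "nat \<Rightarrow> real" and L :: real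
    and h :: "real^'n \<Rightarrow> real" and hb :: "nat \<Rightarrow> real^'n \<Rightarrow> real"
    and \<alpha> :: real and \<Phi> :: "real^'n \<Rightarrow> real" and \<Phi>star :: real
    and w :: "real^'n \<Rightarrow> real" and gw :: "real^'n \<Rightarrow> real^'n"
    and Vb :: "nat \<Rightarrow> real^'n \<Rightarrow> real^'n \<Rightarrow> real"
    and x0 :: "real^'n" and N :: nat and \<gamma> :: real
    and xs :: "nat \<Rightarrow> nat \<Rightarrow> real^'n"
    and Delta :: "nat \<Rightarrow> real" and D :: real
  assumes blk_range: "\<forall>j. blk j \<in> {1..p}"
    and blk_nonempty: "\<forall>i\<in>{1..p}. \<exists>j. blk j = i"
    and Xb_block: "\<forall>i\<in>{1..p}. Xb i \<subseteq> {v. block_proj blk i v = v}"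
    and Xb_closed: "\<forall>i\<in>{1..p}. closed (Xb i)"
    and Xb_convex: "\<forall>i\<in>{1..p}. convex (Xb i)"
    and X_def: "X = {x. \<forall>i\<in>{1..p}. block_proj blk i x \<in> Xb i}"
    and f_deriv: "\<forall>x\<in>X. (f has_derivative (\<lambda>v. gf x \<bullet> v)) (at x within X)"
    and gf_cont: "continuous_on X gf"
    and Lb_lip: "\<forall>i\<in>{1..p}. \<forall>x\<in>X. \<forall>hh. x + block_proj blk i hh \<in> X \<longrightarrow>
        norm (block_proj blk i (gf (x + block_proj blk i hh)) - block_proj blk i (gf x))
          \<le> Lb i * norm (block_proj blk i hh)"
    and L_def: "L = Max (Lb ` {1..p})"
    and L_pos: "L > 0"
    and alpha_pos: "\<alpha> > 0"
    and h_cont: "continuous_on X h"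
    and h_sc: "strongly_convex_on \<alpha> X h"
    and h_sep: "\<forall>x\<in>X. h x = (\<Sum>i=1..p. hb i (block_proj blk i x))"
    and Phi_def: "\<Phi> = (\<lambda>x. f x + h x)"
    and Phistar_min: "\<exists>xm\<in>X. \<Phi> xm = \<Phi>star \<and> (\<forall>x\<in>X. \<Phi>star \<le> \<Phi> x)"
    and w_dgf: "dist_gen_fun \<alpha> X w gw"
    and V_sep: "\<forall>x\<in>X. \<forall>z\<in>X. bregman w gw x z
        = (\<Sum>i=1..p. Vb i (block_proj blk i x) (block_proj blk i z))"
    and x0_in: "x0 \<in> X"
    and N_pos: "N > 0"
    and gamma_def: "\<gamma> = \<alpha> / L"
    and xs_init: "xs 0 0 = x0"
    and xs_next: "\<forall>k. xs (Suc k) 0 = xs k p"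
    and xs_other: "\<forall>k<N. \<forall>i\<in>{1..p}. \<forall>j\<in>{1..p}. j \<noteq> i \<longrightarrow>
        block_proj blk j (xs k i) = block_proj blk j (xs k (i - 1))"
    and xs_in: "\<forall>k<N. \<forall>i\<in>{1..p}. block_proj blk i (xs k i) \<in> Xb i"
    and xs_argmin: "\<forall>k<N. \<forall>i\<in>{1..p}. \<forall>u\<in>Xb i.
        gf (xs k (i - 1)) \<bullet> block_proj blk i (xs k i)
          + 1 / \<gamma> * Vb i (block_proj blk i (xs k i)) (block_proj blk i (xs k (i - 1)))
          + hb i (block_proj blk i (xs k i))
        \<le> gf (xs k (i - 1)) \<bullet> u + 1 / \<gamma> * Vb i u (block_proj blk i (xs k (i - 1))) + hb i u"
    and Delta_def: "\<forall>k. Delta k = (\<Sum>i=1..p.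
        (norm ((1 / \<gamma>) *\<^sub>R (block_proj blk i (xs k (i - 1)) - block_proj blk i (xs k i))))\<^sup>2)"
    and D_def: "D = sqrt ((\<Phi> x0 - \<Phi>star) / L)"
  shows "Min (Delta ` {..<N}) \<le> D\<^sup>2 * L / (real N * (\<alpha>\<^sup>2 / (2 * L)))
         \<and> D\<^sup>2 * L / (real N * (\<alpha>\<^sup>2 / (2 * L))) = 2 * D\<^sup>2 * L\<^sup>2 / (real N * \<alpha>\<^sup>2)"
  proof -
  let ?bp = "block_proj blk"
  have finP: "finite {1..p}" by simp
  have cX: "convex X"
  proof (rule convexI)
    fix x y :: "real^'n" and u v :: real
    assume x0: "x \<in> X" and y0: "y \<in> X" and u: "0 \<le> u" and v: "0 \<le> v" and uv1: "u + v = 1"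
    have x: "\<forall>i\<in>{1..p}. ?bp i x \<in> Xb i" and y: "\<forall>i\<in>{1..p}. ?bp i y \<in> Xb i"
      using x0 y0 X_def by auto
    have uv: "0 \<le> u \<and> 0 \<le> v \<and> u + v = 1" using u v uv1 by simp
    have "?bp i (u *\<^sub>R x + v *\<^sub>R y) \<in> Xb i" if i: "i \<in> {1..p}" for i
    proof -
    have "u *\<^sub>R ?bp i x + v *\<^sub>R ?bp i y \<in> Xb i"
      using Xb_convex i x y uv by (auto intro: convexD)
    then show "?bp i (u *\<^sub>R x + v *\<^sub>R y) \<in> Xb i" by (simp add: bp_add bp_scale)
    qed
    then show "u *\<^sub>R x + v *\<^sub>R y \<in> X" using X_def by auto
  qed
  have Lb_le: "\<And>i. i\<in>{1..p} \<Longrightarrow> Lb i \<le> L" using L_def by simp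
  have gam: "1/\<gamma> = L/\<alpha>" using gamma_def by simp
  have Xi: "\<And>k i. k < N \<Longrightarrow> xs k 0 \<in> X \<Longrightarrow> i \<le> p \<Longrightarrow> xs k i \<in> X"
  proof -
    fix k i assume k: "k < N" and x0k: "xs k 0 \<in> X"
    show "i \<le> p \<Longrightarrow> xs k i \<in> X"
    proof (induction i)
      case 0 then show ?case using x0k by simp
    next
      case (Suc i)
      then have IH: "xs k i \<in> X" by simp
      have "?bp j (xs k (Suc i)) \<in> Xb j" if j: "j\<in>{1..p}" for j
      proof (cases "j = Suc i")
        case True then show ?thesis using xs_in k Suc.prems by auto
      next
        case False
        then have "?bp j (xs k (Suc i)) = ?bp j (xs k i)"
          using xs_other k Suc.prems j by fastforce
        then show ?thesis using IH j X_def by auto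
      qed
      then show ?case using X_def by auto
    qed
  qed
  have X0: "\<And>k. k \<le> N \<Longrightarrow> xs k 0 \<in> X"
  proof -
    fix k show "k \<le> N \<Longrightarrow> xs k 0 \<in> X"
    proof (induction k)
      case 0 then show ?case using xs_init x0_in by simp
    next
      case (Suc k)
      then have "xs k 0 \<in> X" by simp
      then have "xs k p \<in> X" using Xi Suc.prems by simp
      then show ?case using xs_next by simp
    qed
  qed
  have XX: "\<And>k i. k < N \<Longrightarrow> i \<le> p \<Longrightarrow> xs k i \<in> X" using Xi X0 by simp
  have step: "\<Phi> (xs k i) \<le> \<Phi> (xs k (i-1)) - L/2 * (norm (xs k (i-1) - xs k i))\<^sup>2"
    if k: "k < N" and i: "i \<in> {1..p}" for k i
  proof -
    define y where "y = xs k (i-1)"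
    define y' where "y' = xs k i"
    have y: "y \<in> X" using XX[of k "i-1"] k i unfolding y_def by auto
    have y': "y' \<in> X" using XX k i by (simp add: y'_def)
    have off: "\<forall>j\<in>{1..p}. j \<noteq> i \<longrightarrow> ?bp j y' = ?bp j y"
      using xs_other k i by (simp add: y_def y'_def)
    have dd: "?bp i (y' - y) = y' - y" by (rule bp_off[OF blk_range off])
    define \<Psi> where "\<Psi> = (\<lambda>x. gf y \<bullet> x + 1/\<gamma> * bregman w gw x y + h x)"
    define C where "C = (\<Sum>j\<in>{1..p}-{i}. gf y \<bullet> ?bp j y) + 1/\<gamma> * (\<Sum>j\<in>{1..p}-{i}. Vb j (?bp j y) (?bp j y))
        + (\<Sum>j\<in>{1..p}-{i}. hb j (?bp j y))"
    have Psi_eq: "\<Psi> x = gf y \<bullet> ?bp i x + 1/\<gamma> * Vb i (?bp i x) (?bp i y) + hb i (?bp i x) + C"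
      if x: "x \<in> X" and ox: "\<forall>j\<in>{1..p}. j \<noteq> i \<longrightarrow> ?bp j x = ?bp j y" for x
    proof -
      have "gf y \<bullet> x = gf y \<bullet> (\<Sum>j\<in>{1..p}. ?bp j x)" using bp_sum[OF blk_range finP] by simp
      also have "\<dots> = (\<Sum>j\<in>{1..p}. gf y \<bullet> ?bp j x)" by (simp add: inner_sum_right)
      also have "\<dots> = gf y \<bullet> ?bp i x + (\<Sum>j\<in>{1..p}-{i}. gf y \<bullet> ?bp j y)"
        by (rule sum_split_off[OF finP i ox, of "\<lambda>j v. gf y \<bullet> v"])
      finally have e1: "gf y \<bullet> x = gf y \<bullet> ?bp i x + (\<Sum>j\<in>{1..p}-{i}. gf y \<bullet> ?bp j y)" .
      have e2: "bregman w gw x y = Vb i (?bp i x) (?bp i y) + (\<Sum>j\<in>{1..p}-{i}. Vb j (?bp j y) (?bp j y))"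
        using V_sep x y sum_split_off[OF finP i ox, of "\<lambda>j v. Vb j v (?bp j y)"] by simp
      have e3: "h x = hb i (?bp i x) + (\<Sum>j\<in>{1..p}-{i}. hb j (?bp j y))"
        using h_sep x sum_split_off[OF finP i ox, of "\<lambda>j v. hb j v"] by simp
      show ?thesis unfolding \<Psi>_def C_def e1 e2 e3 by (simp add: algebra_simps)
    qed
    have am: "\<forall>u\<in>Xb i. gf y \<bullet> ?bp i y' + 1/\<gamma> * Vb i (?bp i y') (?bp i y) + hb i (?bp i y')
        \<le> gf y \<bullet> u + 1/\<gamma> * Vb i u (?bp i y) + hb i u"
      using xs_argmin k i unfolding y_def y'_def by blast
    have min: "\<Psi> y' \<le> \<Psi> x"
      if x: "x \<in> X" and ox: "\<forall>j\<in>{1..p}. j \<noteq> i \<longrightarrow> ?bp j x = ?bp j y" for x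
    proof -
      have "?bp i x \<in> Xb i" using x i X_def by auto
      then show ?thesis using am Psi_eq[OF x ox] Psi_eq[OF y' off] by auto
    qed
    have Byy: "bregman w gw y y = 0" by (simp add: bregman_def)
    define n where "n = (norm (y - y'))\<^sup>2"
    have hsc: "\<forall>x\<in>X. \<forall>z\<in>X. \<forall>t::real. 0 \<le> t \<and> t \<le> 1 \<longrightarrow>
        h (t *\<^sub>R x + (1 - t) *\<^sub>R z) \<le> t * h x + (1 - t) * h z - \<alpha> / 2 * t * (1 - t) * (norm (x - z))\<^sup>2"
      using h_sc by (simp add: strongly_convex_on_def)
    have ginv: "1/\<gamma> > 0" using gam L_pos alpha_pos by simp
    have "\<Psi> y' \<le> \<Psi> y - ((\<alpha> + L)/2 * n) * (1 - t)" if t: "t \<in> {0<..<1}" for t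
    proof -
      define ut where "ut = t *\<^sub>R y + (1 - t) *\<^sub>R y'"
      have ut: "ut \<in> X" using cX y y' t by (auto simp: ut_def intro: convexD)
      have out: "\<forall>j\<in>{1..p}. j \<noteq> i \<longrightarrow> ?bp j ut = ?bp j y"
      proof (intro ballI impI)
        fix j assume j: "j \<in> {1..p}" "j \<noteq> i"
        then have e: "?bp j y' = ?bp j y" using off by simp
        have "?bp j ut = t *\<^sub>R ?bp j y + (1 - t) *\<^sub>R ?bp j y"
          by (simp add: ut_def bp_add bp_scale e)
        also have "\<dots> = ?bp j y" by (simp add: scaleR_left_distrib[symmetric])
        finally show "?bp j ut = ?bp j y" .
      qed
      have m1: "\<Psi> y' \<le> \<Psi> ut" by (rule min[OF ut out])
      have lin: "gf y \<bullet> ut = t * (gf y \<bullet> y) + (1 - t) * (gf y \<bullet> y')"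
        by (simp add: ut_def inner_add_right)
      have bs: "bregman w gw ut y \<le> t * bregman w gw y y + (1 - t) * bregman w gw y' y - \<alpha>/2 * t * (1 - t) * n"
        using breg_sc[OF w_dgf cX y y' y, of t] t by (simp add: ut_def n_def)
      have bs2: "1/\<gamma> * bregman w gw ut y \<le> 1/\<gamma> * ((1 - t) * bregman w gw y' y) - L/2 * t * (1 - t) * n"
      proof -
        have "1/\<gamma> * bregman w gw ut y \<le> 1/\<gamma> * ((1 - t) * bregman w gw y' y - \<alpha>/2 * t * (1 - t) * n)"
          using bs Byy ginv by (intro mult_left_mono) auto
        also have "\<dots> = 1/\<gamma> * ((1 - t) * bregman w gw y' y) - L/2 * t * (1 - t) * n"
        proof -
          have ga: "1/\<gamma> * \<alpha> = L" using gam alpha_pos by simp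
          have "1/\<gamma> * ((1 - t) * bregman w gw y' y - \<alpha>/2 * t * (1 - t) * n)
              = 1/\<gamma> * ((1 - t) * bregman w gw y' y) - (1/\<gamma> * \<alpha>)/2 * t * (1 - t) * n"
            by (rule aux_ring)
          then show ?thesis unfolding ga .
        qed
        finally show ?thesis .
      qed
      have hs: "h ut \<le> t * h y + (1 - t) * h y' - \<alpha> / 2 * t * (1 - t) * n"
        using hsc y y' t by (simp add: ut_def n_def)
      have "\<Psi> ut \<le> t * \<Psi> y + (1 - t) * \<Psi> y' - (\<alpha> + L)/2 * t * (1 - t) * n"
        unfolding \<Psi>_def Byy using aux_comb[OF lin bs2 hs] by simp
      with m1 have "t * \<Psi> y' \<le> t * (\<Psi> y - ((\<alpha> + L)/2 * n) * (1 - t))"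
        by (simp add: algebra_simps)
      then show ?thesis using t by simp
    qed
    then have Bmu: "\<Psi> y' \<le> \<Psi> y - (\<alpha> + L)/2 * n" by (rule le_lim01)
    have nn: "n = (norm (y' - y))\<^sup>2" by (simp add: n_def norm_minus_commute)
    have Bl: "1/\<gamma> * bregman w gw y' y \<ge> L/2 * n"
    proof -
      have "1/\<gamma> * bregman w gw y' y \<ge> 1/\<gamma> * (\<alpha>/2 * n)"
        using breg_lb[OF w_dgf cX y' y] ginv nn by (intro mult_left_mono) auto
      moreover have "1/\<gamma> * (\<alpha>/2 * n) = L/2 * n" using gam alpha_pos by simp
      ultimately show ?thesis by linarith
    qed
    have hbound: "h y' \<le> h y - gf y \<bullet> (y' - y) - L/2 * n - (\<alpha> + L)/2 * n"
    proof -
      have "gf y \<bullet> y' + 1/\<gamma> * bregman w gw y' y + h y' \<le> gf y \<bullet> y + 1/\<gamma> * 0 + h y - (\<alpha> + L)/2 * n"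
        using Bmu Byy unfolding \<Psi>_def by simp
      then show ?thesis using Bl unfolding inner_diff_right by linarith
    qed
    have lip: "\<forall>x\<in>X. \<forall>hh. x + ?bp i hh \<in> X \<longrightarrow>
        norm (?bp i (gf (x + ?bp i hh)) - ?bp i (gf x)) \<le> Lb i * norm (?bp i hh)"
      using Lb_lip i by blast
    have fb: "f (y + (y' - y)) \<le> f y + gf y \<bullet> (y' - y) + Lb i/2 * (norm (y' - y))\<^sup>2"
      by (rule descent[OF f_deriv cX y _ dd lip]) (use y' in simp)
    have "Lb i/2 * n \<le> L/2 * n" using Lb_le[OF i] by (intro mult_right_mono) (auto simp: n_def)
    then have "f y' \<le> f y + gf y \<bullet> (y' - y) + L/2 * n" using fb nn by simp
    then have "\<Phi> y' \<le> \<Phi> y - L/2 * n - \<alpha>/2 * n" using hbound unfolding Phi_def inner_diff_right by (simp add: field_simps)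
    moreover have "\<alpha>/2 * n \<ge> 0" using alpha_pos by (simp add: n_def)
    ultimately show ?thesis by (simp add: y_def y'_def n_def)
  qed
  define T where "T = (\<lambda>k i. (norm ((1 / \<gamma>) *\<^sub>R (?bp i (xs k (i - 1)) - ?bp i (xs k i))))\<^sup>2)"
  have stepT: "\<Phi> (xs k i) \<le> \<Phi> (xs k (i-1)) - \<alpha>\<^sup>2/(2*L) * T k i"
    if k: "k < N" and i: "i \<in> {1..p}" for k i
  proof -
    have off: "\<forall>j\<in>{1..p}. j \<noteq> i \<longrightarrow> ?bp j (xs k (i-1)) = ?bp j (xs k i)"
      using xs_other k i by simp
    have dd: "?bp i (xs k (i-1) - xs k i) = xs k (i-1) - xs k i" by (rule bp_off[OF blk_range off])
    have "T k i = (L/\<alpha>)\<^sup>2 * (norm (xs k (i-1) - xs k i))\<^sup>2"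
      unfolding T_def gam using dd L_pos alpha_pos
      by (simp add: bp_diff[symmetric] power_mult_distrib power_divide)
    then have "\<alpha>\<^sup>2/(2*L) * T k i = L/2 * (norm (xs k (i-1) - xs k i))\<^sup>2"
      using L_pos alpha_pos by (simp add: power2_eq_square field_simps)
    then show ?thesis using step[OF k i] by simp
  qed
  have DeltaT: "Delta k = (\<Sum>i=1..p. T k i)" for k using Delta_def by (simp add: T_def)
  have inner: "i \<le> p \<Longrightarrow> \<Phi> (xs k i) \<le> \<Phi> (xs k 0) - \<alpha>\<^sup>2/(2*L) * (\<Sum>j=1..i. T k j)"
    if k: "k < N" for k i
  proof (induction i)
    case 0 then show ?case by simp
  next
    case (Suc i)
    then have IH: "\<Phi> (xs k i) \<le> \<Phi> (xs k 0) - \<alpha>\<^sup>2/(2*L) * (\<Sum>j=1..i. T k j)" by simp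
    have "\<Phi> (xs k (Suc i)) \<le> \<Phi> (xs k i) - \<alpha>\<^sup>2/(2*L) * T k (Suc i)"
      using stepT[OF k, of "Suc i"] Suc.prems by simp
    then show ?case using IH by (simp add: algebra_simps)
  qed
  have outer: "n \<le> N \<Longrightarrow> \<Phi> (xs n 0) \<le> \<Phi> x0 - \<alpha>\<^sup>2/(2*L) * (\<Sum>k<n. Delta k)" for n
  proof (induction n)
    case 0 then show ?case using xs_init by simp
  next
    case (Suc n)
    then have IH: "\<Phi> (xs n 0) \<le> \<Phi> x0 - \<alpha>\<^sup>2/(2*L) * (\<Sum>k<n. Delta k)" by simp
    have "\<Phi> (xs n p) \<le> \<Phi> (xs n 0) - \<alpha>\<^sup>2/(2*L) * Delta n"
      using inner[of n p] Suc.prems DeltaT by simp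
    moreover have "\<alpha>\<^sup>2/(2*L) * (\<Sum>k<Suc n. Delta k) = \<alpha>\<^sup>2/(2*L) * (\<Sum>k<n. Delta k) + \<alpha>\<^sup>2/(2*L) * Delta n"
      by (simp add: distrib_left)
    moreover have "\<Phi> (xs (Suc n) 0) = \<Phi> (xs n p)" using xs_next by simp
    ultimately show ?case using IH by linarith
  qed
  obtain xm where xm: "xm \<in> X" "\<Phi> xm = \<Phi>star" "\<forall>x\<in>X. \<Phi>star \<le> \<Phi> x" using Phistar_min by blast
  have "\<Phi>star \<le> \<Phi> (xs N 0)" using xm X0[of N] by simp
  then have S: "\<alpha>\<^sup>2/(2*L) * (\<Sum>k<N. Delta k) \<le> \<Phi> x0 - \<Phi>star" using outer[of N] by simp
  have gap: "\<Phi> x0 - \<Phi>star \<ge> 0" using xm x0_in by simp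
  have D2: "D\<^sup>2 = (\<Phi> x0 - \<Phi>star) / L" using D_def gap L_pos by simp
  have "real N * Min (Delta ` {..<N}) \<le> (\<Sum>k<N. Delta k)"
    using sum_bounded_below[of "{..<N}" "Min (Delta ` {..<N})" Delta] by simp
  then have "\<alpha>\<^sup>2/(2*L) * (real N * Min (Delta ` {..<N})) \<le> \<Phi> x0 - \<Phi>star"
    using S L_pos alpha_pos by (smt (verit) mult_left_mono zero_le_divide_iff zero_le_power2)
  then have "Min (Delta ` {..<N}) \<le> (\<Phi> x0 - \<Phi>star) / (real N * (\<alpha>\<^sup>2 / (2 * L)))"
    using N_pos L_pos alpha_pos by (simp add: field_simps)
  moreover have E: "D\<^sup>2 * L = \<Phi> x0 - \<Phi>star" using D2 L_pos by simp
  ultimately have c1: "Min (Delta ` {..<N}) \<le> D\<^sup>2 * L / (real N * (\<alpha>\<^sup>2 / (2 * L)))"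
    by (simp only: E)
  have c2: "D\<^sup>2 * L / (real N * (\<alpha>\<^sup>2 / (2 * L))) = 2 * D\<^sup>2 * L\<^sup>2 / (real N * \<alpha>\<^sup>2)"
    using N_pos L_pos alpha_pos by (simp add: field_simps power2_eq_square)
  show ?thesis using c1 c2 by simp
qed

end
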